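(* For all positive integers $n$ and $w$ with $w \le n$ and all (nonnegative integers) $m \le n$, $$U(n,w,m) \ge \frac{m}{n}\binom{n}{w}.$$
   Context: An $(n,4,w)$ constant-weight code is a set of binary vectors of length $n$ and Hamming weight $w$ any two of which are at Hamming distance at least $4$. $U(n,w,m)$ denotes the largest possible cardinality of a union of $m$ constant-weight codes, each with parameters $(n,4,w)$. *)

theory Defs
  imports Complex_Main
begin

definition hweight :: "bool list \<Rightarrow> nat" where
  "hweight x = card {i. i < length x \<and> x ! i}"

definition hdist :: "bool list \<Rightarrow> bool list \<Rightarrow> nat" where
  "hdist x y = card {i. i < length x \<and> x ! i \<noteq> y ! i}"

definition cw_code :: "nat \<Rightarrow> nat \<Rightarrow> bool list set \<Rightarrow> bool" where
  "cw_code n w C \<longleftrightarrow>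
     (\<forall>x\<in>C. length x = n \<and> hweight x = w) \<and>
     (\<forall>x\<in>C. \<forall>y\<in>C. x \<noteq> y \<longrightarrow> hdist x y \<ge> 4)"

definition U :: "nat \<Rightarrow> nat \<Rightarrow> nat \<Rightarrow> nat" where
  "U n w m = Max {card (\<Union>i<m. C i) | C. \<forall>i<m. cw_code n w (C i)}"

end

theory Submission
  imports Defs "HOL-Number_Theory.Cong"
begin

definition supp :: "bool list \<Rightarrow> nat set" where
  "supp x = {i. i < length x \<and> x ! i}"

lemma supp_sub: "supp x \<subseteq> {..<length x}"
  by (auto simp: supp_def)

lemma supp_fin: "finite (supp x)"
  using finite_subset[OF supp_sub] by auto

lemma supp_inj:
  assumes "length x = length y" "supp x = supp y"
  shows "x = y"
proof (rule nth_equalityI)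
  show "length x = length y" by fact
  fix i assume "i < length x"
  then show "x ! i = y ! i" using assms
    by (metis (mono_tags, lifting) mem_Collect_eq supp_def)
qed

lemma hdist_supp:
  assumes "length x = length y"
  shows "hdist x y = card (supp x - supp y) + card (supp y - supp x)"
proof -
  have "{i. i < length x \<and> x ! i \<noteq> y ! i} = (supp x - supp y) \<union> (supp y - supp x)"
    using assms by (auto simp: supp_def)
  moreover have "(supp x - supp y) \<inter> (supp y - supp x) = {}" by auto
  ultimately show ?thesis unfolding hdist_def
    by (simp add: card_Un_disjoint supp_fin)
qed

lemma mod_lcancel: "((c::nat) + i) mod n = (c + j) mod n \<Longrightarrow> i mod n = j mod n"
  by (metis cong_def cong_add_lcancel_nat)

lemma sum_split1: fixes A B :: "nat set" assumes fA: "finite A" and i: "A - B = {i}"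
  shows "\<Sum>A = \<Sum>(A \<inter> B) + i"
proof -
  have "A = insert i (A \<inter> B)" "i \<notin> A \<inter> B" using i by auto
  then show ?thesis using fA by (metis add.commute finite_Int sum.insert)
qed

lemma key:
  fixes A B :: "nat set"
  assumes fA: "finite A" and fB: "finite B" and cA: "card A = card B"
    and AB: "A \<noteq> B" and sA: "A \<subseteq> {..<n}" and sB: "B \<subseteq> {..<n}"
    and md: "(\<Sum>A + k) mod n = (\<Sum>B + k) mod n"
  shows "card (A - B) + card (B - A) \<ge> 4"
proof -
  have e1: "card (A - B) = card A - card (A \<inter> B)"
    by (metis card_Diff_subset_Int fA finite_Int)
  have e2: "card (B - A) = card B - card (A \<inter> B)"
    by (metis card_Diff_subset_Int fB finite_Int inf_commute)
  have eq: "card (A - B) = card (B - A)" using e1 e2 cA by simp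
  have ne: "card (A - B) \<noteq> 0"
  proof
    assume "card (A - B) = 0"
    then have "A \<subseteq> B" using fA by auto
    moreover have "B \<subseteq> A" using \<open>card (A - B) = 0\<close> eq fB by auto
    ultimately show False using AB by auto
  qed
  have ne1: "card (A - B) \<noteq> 1"
  proof
    assume c1: "card (A - B) = 1"
    then obtain i where i: "A - B = {i}" using card_1_singletonE by blast
    from c1 eq obtain j where j: "B - A = {j}" using card_1_singletonE by metis
    have SA: "\<Sum>A = \<Sum>(A \<inter> B) + i" using sum_split1[OF fA i] .
    have SB: "\<Sum>B = \<Sum>(B \<inter> A) + j" using sum_split1[OF fB j] .
    then have SB: "\<Sum>B = \<Sum>(A \<inter> B) + j" by (simp add: Int_commute)
    have "((\<Sum>(A \<inter> B) + k) + i) mod n = ((\<Sum>(A \<inter> B) + k) + j) mod n"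
      using md SA SB by (simp add: ac_simps)
    then have "i mod n = j mod n" by (rule mod_lcancel)
    moreover have "i < n" "j < n" using i j sA sB by auto
    ultimately have "i = j" by simp
    then show False using i j by auto
  qed
  show ?thesis using eq ne ne1 by linarith
qed

theorem proposition19:
  fixes n w m :: nat
  assumes "0 < n" and "0 < w" and "w \<le> n" and "m \<le> n"
  shows "real (U n w m) \<ge> real m / real n * real (n choose w)"
proof -
  define V where "V = {x. length x = n \<and> hweight x = w}"
  define D where "D t k = {x \<in> V. (\<Sum>(supp x) + k) mod n = t}" for t k
  have hw: "hweight x = card (supp x)" for x by (simp add: hweight_def supp_def)
  have finL: "finite {x::bool list. length x = n}"
    using finite_lists_length_eq[of "UNIV::bool set" n] by simp
  have finV: "finite V" unfolding V_def by (rule finite_subset[OF _ finL]) auto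
  have bij: "bij_betw supp V {S. S \<subseteq> {..<n} \<and> card S = w}"
    unfolding bij_betw_def
  proof
    show "inj_on supp V" unfolding V_def inj_on_def using supp_inj by auto
    show "supp ` V = {S. S \<subseteq> {..<n} \<and> card S = w}"
    proof
      show "supp ` V \<subseteq> {S. S \<subseteq> {..<n} \<and> card S = w}"
        unfolding V_def using supp_sub hw by fastforce
      show "{S. S \<subseteq> {..<n} \<and> card S = w} \<subseteq> supp ` V"
      proof
        fix S assume S: "S \<in> {S. S \<subseteq> {..<n} \<and> card S = w}"
        define x where "x = map (\<lambda>i. i \<in> S) [0..<n]"
        have sx: "supp x = S" using S unfolding x_def supp_def by auto
        have "x \<in> V" unfolding V_def using sx S hw x_def by simp
        then show "S \<in> supp ` V" using sx by force
      qed
    qed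
  qed
  have cardV: "card V = n choose w"
    using bij_betw_same_card[OF bij] n_subsets[of "{..<n}" w] by simp
  have part: "card V = (\<Sum>t<n. card (D t k))" for k
  proof -
    have "V = (\<Union>t\<in>{..<n}. D t k)" unfolding D_def using assms(1) by auto
    moreover have "card (\<Union>t\<in>{..<n}. D t k) = (\<Sum>t<n. card (D t k))"
      by (rule card_UN_disjoint) (auto simp: D_def intro: finite_subset[OF _ finV])
    ultimately show ?thesis by simp
  qed
  have tot: "(\<Sum>t<n. \<Sum>k<m. card (D t k)) = m * card V"
  proof -
    have "(\<Sum>t<n. \<Sum>k<m. card (D t k)) = (\<Sum>k<m. \<Sum>t<n. card (D t k))"
      by (rule sum.swap)
    also have "\<dots> = (\<Sum>k<m. card V)" using part by simp
    finally show ?thesis by simp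
  qed
  have "\<exists>t<n. real (\<Sum>k<m. card (D t k)) \<ge> real m / real n * real (card V)"
  proof (rule ccontr)
    assume "\<not> ?thesis"
    then have lt: "\<And>t. t \<in> {..<n} \<Longrightarrow> real (\<Sum>k<m. card (D t k)) < real m / real n * real (card V)"
      by auto
    have "(\<Sum>t<n. real (\<Sum>k<m. card (D t k))) < (\<Sum>t<n. real m / real n * real (card V))"
      by (rule sum_strict_mono) (use lt assms(1) in auto)
    also have "\<dots> = real m * real (card V)" using assms(1) by simp
    finally have "real (\<Sum>t<n. \<Sum>k<m. card (D t k)) < real (m * card V)"
      by simp
    then show False using tot by simp
  qed
  then obtain t where t: "t < n"
    and big: "real (\<Sum>k<m. card (D t k)) \<ge> real m / real n * real (card V)" by blast
  let ?C = "\<lambda>k. D t k"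
  have codes: "\<forall>k<m. cw_code n w (?C k)"
  proof (intro allI impI)
    fix k assume "k < m"
    show "cw_code n w (?C k)" unfolding cw_code_def
    proof (rule conjI)
      show "\<forall>x\<in>?C k. length x = n \<and> hweight x = w"
        unfolding D_def V_def by auto
    next
      show "\<forall>x\<in>?C k. \<forall>y\<in>?C k. x \<noteq> y \<longrightarrow> 4 \<le> hdist x y"
      proof (intro ballI impI)
      fix x y assume x: "x \<in> ?C k" and y: "y \<in> ?C k" and xy: "x \<noteq> y"
      have lx: "length x = n" and ly: "length y = n" and cx: "card (supp x) = w"
        and cy: "card (supp y) = w"
        using x y hw unfolding D_def V_def by auto
      have ne: "supp x \<noteq> supp y" using supp_inj lx ly xy by auto
      have md: "(\<Sum>(supp x) + k) mod n = (\<Sum>(supp y) + k) mod n"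
        using x y unfolding D_def by auto
      have "card (supp x - supp y) + card (supp y - supp x) \<ge> 4"
        by (rule key[OF supp_fin supp_fin _ ne _ _ md]) (use cx cy supp_sub[of x] supp_sub[of y] lx ly in auto)
      then show "4 \<le> hdist x y" using hdist_supp lx ly by simp
    qed
    qed
  qed
  have cu: "card (\<Union>k<m. ?C k) = (\<Sum>k<m. card (?C k))"
  proof (rule card_UN_disjoint)
    show "finite {..<m}" by simp
    show "\<forall>i\<in>{..<m}. finite (?C i)" by (auto simp: D_def intro: finite_subset[OF _ finV])
    show "\<forall>i\<in>{..<m}. \<forall>j\<in>{..<m}. i \<noteq> j \<longrightarrow> ?C i \<inter> ?C j = {}"
    proof (intro ballI impI)
      fix i j assume i: "i \<in> {..<m}" and j: "j \<in> {..<m}" and ij: "i \<noteq> j"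
      show "?C i \<inter> ?C j = {}"
      proof (rule ccontr)
        assume "?C i \<inter> ?C j \<noteq> {}"
        then obtain x where "(\<Sum>(supp x) + i) mod n = t" "(\<Sum>(supp x) + j) mod n = t"
          unfolding D_def by auto
        then have "(\<Sum>(supp x) + i) mod n = (\<Sum>(supp x) + j) mod n" by simp
        then have "i mod n = j mod n" by (rule mod_lcancel)
        then show False using i j ij assms(4) by simp
      qed
    qed
  qed
  have finS: "finite {card (\<Union>i<m. C i) | C. \<forall>i<m. cw_code n w (C i)}"
  proof (rule finite_subset[of _ "{..card {x::bool list. length x = n}}"])
    show "{card (\<Union>i<m. C i) | C. \<forall>i<m. cw_code n w (C i)} \<subseteq> {..card {x::bool list. length x = n}}"
    proof
      fix c assume "c \<in> {card (\<Union>i<m. C i) | C. \<forall>i<m. cw_code n w (C i)}"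
      then obtain C where c: "c = card (\<Union>i<m. C i)" and C: "\<forall>i<m. cw_code n w (C i)" by blast
      have "(\<Union>i<m. C i) \<subseteq> {x. length x = n}" using C unfolding cw_code_def by auto
      then show "c \<in> {..card {x::bool list. length x = n}}" using c card_mono[OF finL] by auto
    qed
  qed simp
  have "card (\<Union>k<m. ?C k) \<in> {card (\<Union>i<m. C i) | C. \<forall>i<m. cw_code n w (C i)}"
    using codes by blast
  then have "card (\<Union>k<m. ?C k) \<le> U n w m" unfolding U_def using finS by (rule Max_ge[rotated])
  then have "(\<Sum>k<m. card (D t k)) \<le> U n w m" using cu by simp
  then have "real (\<Sum>k<m. card (D t k)) \<le> real (U n w m)" by (simp only: of_nat_le_iff)
  then show ?thesis using big cardV by simp
qed

end
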